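(* Let $G$ be a graph, $d$ a positive integer, $X\subset V(G)$, and let $C(X)$ be the $d$-critical set of $X$. Suppose $B$ is an escape-way in $G$ with $V_{\text{out}}(B)\subset C(X)$. Then $|A_{K(B)}(v)|\geq \deg_G(v)-d$ for every vertex $v\notin C(X)$.
   Context: The $d$-critical set $C(X)$ of a set $X\subset V(G)$ is the terminal set of the following bootstrap percolation process: $X_0=X$, and $X_{i+1}$ is the union of $X_i$ with all vertices $v$ having at least $d$ neighbours at distance at most $2$ from $X_i$ in the graph $G\setminus v$ (vertices of $X_i$ have distance $0$). An oriented subgraph of $G$ is a subgraph with an orientation of each edge, viewed as a digraph on $V(G)$; $N^-_D(v)=\{u:uv\in E(D)\}$; $V_{\text{in}}(D)$ and $V_{\text{out}}(D)$ are the sets of vertices with at least one in-neighbour, resp. out-neighbour, in $D$. An escape-way in $G$ is an oriented subgraph $D$ of $G$ in which every vertex has in-degree at most $1$ and such that whenever $x,y\in V_{\text{in}}(D)$ and $xy\in E(G)$, exactly one of $xy$, $yx$ lies in $E(D)$. For a (bi-)oriented subgraph $D$ (possibly containing both orientations of an edge), $A_D(v)=N_G(v)\setminus\big(V_{\text{in}}(D-v)\cup N^-_D(v)\big)$, where $D-v$ is $D$ with $v$ deleted. $K(D)$ is obtained from $D$ by adding, for every directed edge $uv\in E(D)$, all directed edges $vw$ with $w\in N_G(v)\setminus\{u\}$. *)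

theory Defs
  imports Main
begin

definition graph :: "'a set \<Rightarrow> ('a \<Rightarrow> 'a \<Rightarrow> bool) \<Rightarrow> bool" where
  "graph V E \<longleftrightarrow> finite V \<and> (\<forall>u v. E u v \<longrightarrow> u \<in> V \<and> v \<in> V)
     \<and> (\<forall>u v. E u v \<longrightarrow> E v u) \<and> (\<forall>u. \<not> E u u)"

definition nbhd :: "('a \<Rightarrow> 'a \<Rightarrow> bool) \<Rightarrow> 'a \<Rightarrow> 'a set" where
  "nbhd E v = {u. E v u}"

definition degree :: "('a \<Rightarrow> 'a \<Rightarrow> bool) \<Rightarrow> 'a \<Rightarrow> nat" where
  "degree E v = card (nbhd E v)"

text \<open>u is at distance at most 2 from S in the graph G with vertex v deleted
(vertices of S have distance 0).\<close>
definition near2 :: "('a \<Rightarrow> 'a \<Rightarrow> bool) \<Rightarrow> 'a \<Rightarrow> 'a set \<Rightarrow> 'a \<Rightarrow> bool" where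
  "near2 E v S u \<longleftrightarrow> u \<noteq> v \<and>
     (u \<in> S
      \<or> (\<exists>x\<in>S. x \<noteq> v \<and> E u x)
      \<or> (\<exists>w x. w \<noteq> v \<and> x \<in> S \<and> x \<noteq> v \<and> E u w \<and> E w x))"

definition crit_step :: "'a set \<Rightarrow> ('a \<Rightarrow> 'a \<Rightarrow> bool) \<Rightarrow> nat \<Rightarrow> 'a set \<Rightarrow> 'a set" where
  "crit_step V E d S = S \<union> {v \<in> V. card {u. E v u \<and> near2 E v S u} \<ge> d}"

text \<open>The d-critical set: terminal set of the (monotone) process, i.e. the union
of all stages.\<close>
definition critical_set :: "'a set \<Rightarrow> ('a \<Rightarrow> 'a \<Rightarrow> bool) \<Rightarrow> nat \<Rightarrow> 'a set \<Rightarrow> 'a set" where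
  "critical_set V E d X = (\<Union>i. (crit_step V E d ^^ i) X)"

definition V_in :: "('a \<times> 'a) set \<Rightarrow> 'a set" where
  "V_in D = {v. \<exists>u. (u, v) \<in> D}"

definition V_out :: "('a \<times> 'a) set \<Rightarrow> 'a set" where
  "V_out D = {u. \<exists>v. (u, v) \<in> D}"

definition in_nbhd :: "('a \<times> 'a) set \<Rightarrow> 'a \<Rightarrow> 'a set" where
  "in_nbhd D v = {u. (u, v) \<in> D}"

definition del_vertex :: "('a \<times> 'a) set \<Rightarrow> 'a \<Rightarrow> ('a \<times> 'a) set" where
  "del_vertex D v = {(a, b) \<in> D. a \<noteq> v \<and> b \<noteq> v}"

definition oriented_subgraph :: "('a \<Rightarrow> 'a \<Rightarrow> bool) \<Rightarrow> ('a \<times> 'a) set \<Rightarrow> bool" where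
  "oriented_subgraph E D \<longleftrightarrow> (\<forall>(u, v) \<in> D. E u v) \<and> (\<forall>u v. (u, v) \<in> D \<longrightarrow> (v, u) \<notin> D)"

definition escape_way :: "('a \<Rightarrow> 'a \<Rightarrow> bool) \<Rightarrow> ('a \<times> 'a) set \<Rightarrow> bool" where
  "escape_way E D \<longleftrightarrow> oriented_subgraph E D
     \<and> (\<forall>v. card (in_nbhd D v) \<le> 1 \<and> finite (in_nbhd D v))
     \<and> (\<forall>x y. x \<in> V_in D \<and> y \<in> V_in D \<and> E x y \<longrightarrow> ((x, y) \<in> D \<longleftrightarrow> (y, x) \<notin> D))"

definition A_set :: "('a \<Rightarrow> 'a \<Rightarrow> bool) \<Rightarrow> ('a \<times> 'a) set \<Rightarrow> 'a \<Rightarrow> 'a set" where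
  "A_set E D v = nbhd E v - (V_in (del_vertex D v) \<union> in_nbhd D v)"

definition K_ext :: "('a \<Rightarrow> 'a \<Rightarrow> bool) \<Rightarrow> ('a \<times> 'a) set \<Rightarrow> ('a \<times> 'a) set" where
  "K_ext E D = D \<union> {(v, w). \<exists>u. (u, v) \<in> D \<and> E v w \<and> w \<noteq> u}"

end

theory Submission
  imports Defs
begin

lemma stage_mono:
  "i \<le> j \<Longrightarrow> (crit_step V E d ^^ i) X \<subseteq> (crit_step V E d ^^ j) X"
proof (induction j)
  case 0 then show ?case by simp
next
  case (Suc j)
  then show ?case
    by (cases "i = Suc j") (auto simp: crit_step_def le_Suc_eq)
qed

lemma near2_mono: "near2 E v S u \<Longrightarrow> S \<subseteq> T \<Longrightarrow> near2 E v T u"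
  unfolding near2_def by blast

lemma near2_I0: "u \<noteq> v \<Longrightarrow> u \<in> S \<Longrightarrow> near2 E v S u"
  unfolding near2_def by simp

lemma near2_I1: "u \<noteq> v \<Longrightarrow> x \<in> S \<Longrightarrow> x \<noteq> v \<Longrightarrow> E u x \<Longrightarrow> near2 E v S u"
  unfolding near2_def by blast

lemma near2_I2: "u \<noteq> v \<Longrightarrow> w \<noteq> v \<Longrightarrow> x \<in> S \<Longrightarrow> x \<noteq> v \<Longrightarrow> E u w \<Longrightarrow> E w x
  \<Longrightarrow> near2 E v S u"
  unfolding near2_def by blast

lemma finite_witness:
  assumes "finite F" "\<forall>u\<in>F. near2 E v (critical_set V E d X) u"
  shows "\<exists>i. \<forall>u\<in>F. near2 E v ((crit_step V E d ^^ i) X) u"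
  using assms
proof (induction F rule: finite_induct)
  case empty then show ?case by simp
next
  case (insert x F)
  then obtain i where i: "\<forall>u\<in>F. near2 E v ((crit_step V E d ^^ i) X) u" by auto
  have nx: "near2 E v (critical_set V E d X) x" using insert by auto
  have "\<exists>j. near2 E v ((crit_step V E d ^^ j) X) x"
    using nx unfolding near2_def critical_set_def by blast
  then obtain j where j: "near2 E v ((crit_step V E d ^^ j) X) x" by blast
  have "\<forall>u\<in>insert x F. near2 E v ((crit_step V E d ^^ max i j) X) u"
    using i j near2_mono stage_mono[of i "max i j"] stage_mono[of j "max i j"]
    by (metis insert_iff max.cobounded1 max.cobounded2)
  then show ?case by blast
qed

lemma crit_small:
  assumes g: "graph V E" and v: "v \<in> V" "v \<notin> critical_set V E d X"
  shows "card {u. E v u \<and> near2 E v (critical_set V E d X) u} < d"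
proof (rule ccontr)
  let ?S = "{u. E v u \<and> near2 E v (critical_set V E d X) u}"
  assume "\<not> ?thesis"
  hence ge: "card ?S \<ge> d" by simp
  have "?S \<subseteq> V" using g unfolding graph_def by auto
  hence fin: "finite ?S" using g unfolding graph_def using finite_subset by blast
  have all: "\<forall>u\<in>?S. near2 E v (critical_set V E d X) u" by auto
  obtain i where i: "\<forall>u\<in>?S. near2 E v ((crit_step V E d ^^ i) X) u"
    using finite_witness[OF fin all] by blast
  have sub: "?S \<subseteq> {u. E v u \<and> near2 E v ((crit_step V E d ^^ i) X) u}"
    using i by auto
  have "finite {u. E v u \<and> near2 E v ((crit_step V E d ^^ i) X) u}"
    using g unfolding graph_def by (metis (no_types, lifting) finite_subset mem_Collect_eq subsetI)
  hence "card ?S \<le> card {u. E v u \<and> near2 E v ((crit_step V E d ^^ i) X) u}"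
    using sub card_mono by blast
  hence "v \<in> (crit_step V E d ^^ Suc i) X"
    using ge v(1) by (auto simp: crit_step_def)
  hence "v \<in> critical_set V E d X" unfolding critical_set_def by blast
  thus False using v by blast
qed

theorem proposition2p8:
  fixes V :: "'a set" and E :: "'a \<Rightarrow> 'a \<Rightarrow> bool" and d :: nat
    and X :: "'a set" and B :: "('a \<times> 'a) set"
  assumes "graph V E"
    and "d > 0"
    and "X \<subseteq> V"
    and "escape_way E B"
    and "V_out B \<subseteq> critical_set V E d X"
  shows "\<forall>v \<in> V - critical_set V E d X.
           int (card (A_set E (K_ext E B) v)) \<ge> int (degree E v) - int d"
proof
  fix v assume vV: "v \<in> V - critical_set V E d X"
  let ?C = "critical_set V E d X"
  let ?S = "{u. E v u \<and> near2 E v ?C u}"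
  let ?N = "nbhd E v"
  let ?A = "A_set E (K_ext E B) v"
  have g: "graph V E" by fact
  have sym: "\<And>a b. E a b \<Longrightarrow> E b a" and irr: "\<And>a. \<not> E a a"
    using g unfolding graph_def by auto
  have Bedge: "\<And>a b. (a, b) \<in> B \<Longrightarrow> E a b"
    using assms(4) unfolding escape_way_def oriented_subgraph_def by auto
  have BC: "\<And>a b. (a, b) \<in> B \<Longrightarrow> a \<in> ?C"
    using assms(5) unfolding V_out_def by auto
  have small: "card ?S < d" using crit_small[OF g] vV by auto
  have finN: "finite ?N" using g unfolding graph_def nbhd_def
    by (metis (no_types, lifting) finite_subset mem_Collect_eq subsetI)
  have AN: "?A \<subseteq> ?N" unfolding A_set_def by auto
  have NA: "?N - ?A \<subseteq> ?S"
  proof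
    fix u assume u: "u \<in> ?N - ?A"
    hence evu: "E v u" and uv: "u \<noteq> v" unfolding nbhd_def using irr by auto
    have "u \<in> V_in (del_vertex (K_ext E B) v) \<or> u \<in> in_nbhd (K_ext E B) v"
      using u unfolding A_set_def by auto
    hence "near2 E v ?C u"
    proof
      assume "u \<in> V_in (del_vertex (K_ext E B) v)"
      then obtain a where a: "(a, u) \<in> K_ext E B" "a \<noteq> v"
        unfolding V_in_def del_vertex_def by auto
      show ?thesis
      proof (cases "(a, u) \<in> B")
        case True
        show ?thesis by (rule near2_I1[where E=E and S="critical_set V E d X" and u=u and v=v, OF uv BC[OF True] a(2) sym[OF Bedge[OF True]]])
      next
        case False
        then obtain x where x: "(x, a) \<in> B" "E a u" using a unfolding K_ext_def by auto
        have "x \<in> ?C" using BC[OF x(1)] .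
        hence "x \<noteq> v" using vV by auto
        show ?thesis by (rule near2_I2[where E=E and S="critical_set V E d X" and u=u and v=v, OF uv a(2) \<open>x \<in> ?C\<close> \<open>x \<noteq> v\<close> sym[OF x(2)] sym[OF Bedge[OF x(1)]]])
      qed
    next
      assume "u \<in> in_nbhd (K_ext E B) v"
      hence uvK: "(u, v) \<in> K_ext E B" unfolding in_nbhd_def by auto
      show ?thesis
      proof (cases "(u, v) \<in> B")
        case True
        show ?thesis by (rule near2_I0[where E=E and S="critical_set V E d X" and u=u and v=v, OF uv BC[OF True]])
      next
        case False
        then obtain x where x: "(x, u) \<in> B" using uvK unfolding K_ext_def by auto
        have "x \<in> ?C" using BC[OF x(1)] .
        hence "x \<noteq> v" using vV by auto
        show ?thesis by (rule near2_I1[where E=E and S="critical_set V E d X" and u=u and v=v, OF uv \<open>x \<in> ?C\<close> \<open>x \<noteq> v\<close> sym[OF Bedge[OF x]]])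
      qed
    qed
    thus "u \<in> ?S" using evu by auto
  qed
  have finS: "finite ?S" using finN unfolding nbhd_def
    by (metis (no_types, lifting) finite_subset mem_Collect_eq subsetI)
  have "card ?N \<le> card ?A + card (?N - ?A)"
    using card_Diff_subset[OF finite_subset[OF AN finN] AN] card_mono[OF finN AN] by simp
  also have "card (?N - ?A) \<le> card ?S" using NA finS card_mono by blast
  finally have "card ?N \<le> card ?A + card ?S" by simp
  thus "int (card ?A) \<ge> int (degree E v) - int d"
    using small unfolding degree_def by linarith
qed

end
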